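(* Let $r\ge4$, let $\delta>0$ be a sufficiently small constant, and let $p=o(1)$ with $p>Cn^{-2/(r+1)}(\log n)^{2/((r+1)(r-2))}$ for $C$ sufficiently large. There is a constant $K$ such that w.h.p. no balanced cut of $G_{n,p}$ admits more than $K/p$ bad vertices.
   Context: $V=[n]$ and $G=G_{n,p}$. A cut is an ordered partition $\Pi=(A_1,\dots,A_{r-1})$ of $V$. It is balanced if each block has size strictly between $(1-\delta)n/(r-1)$ and $(1+\delta)n/(r-1)$. $d_{A}(x)$ is the number of $G$-neighbours of $x$ in $A$, and $D_\Pi(x)=\sum_{1\le i<j\le r-1}d_{A_i}(x)d_{A_j}(x)$. With $\psi_r=\frac{r-4}{2(r-3)}$, $\xi_r=\frac{r(r-3)}{2(r-1)^2}$ and $\phi_r=(\psi_r+\xi_r)/2$, a vertex $x$ is bad for $\Pi$ if $x\in A_1$ and $D_\Pi(x)<\phi_rn^2p^2$. *)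

theory Defs
  imports Complex_Main
begin

text \<open>Vertex set V = [n] = {1..n}; a graph on V is a set of 2-element subsets of V.\<close>

definition vset :: "nat \<Rightarrow> nat set" where
  "vset n = {1..n}"

definition all_edges :: "nat \<Rightarrow> nat set set" where
  "all_edges n = {e. \<exists>x y. x \<in> vset n \<and> y \<in> vset n \<and> x \<noteq> y \<and> e = {x, y}}"

definition gnp_prob :: "nat \<Rightarrow> real \<Rightarrow> (nat set set \<Rightarrow> bool) \<Rightarrow> real" where
  "gnp_prob n p Q =
     (\<Sum>E \<in> {E. E \<subseteq> all_edges n \<and> Q E}.
        p ^ card E * (1 - p) ^ (card (all_edges n) - card E))"

text \<open>A cut is an ordered partition (A_1,...,A_{r-1}) of V, given as A :: nat => nat set
  indexed by 1..r-1.\<close>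
definition is_cut :: "nat \<Rightarrow> nat \<Rightarrow> (nat \<Rightarrow> nat set) \<Rightarrow> bool" where
  "is_cut n r A \<longleftrightarrow>
     (\<Union>i\<in>{1..r-1}. A i) = vset n \<and>
     (\<forall>i\<in>{1..r-1}. \<forall>j\<in>{1..r-1}. i \<noteq> j \<longrightarrow> A i \<inter> A j = {})"

definition balanced_cut :: "nat \<Rightarrow> nat \<Rightarrow> real \<Rightarrow> (nat \<Rightarrow> nat set) \<Rightarrow> bool" where
  "balanced_cut n r \<delta> A \<longleftrightarrow> is_cut n r A \<and>
     (\<forall>i\<in>{1..r-1}. (1 - \<delta>) * real n / real (r - 1) < real (card (A i)) \<and>
                    real (card (A i)) < (1 + \<delta>) * real n / real (r - 1))"

definition deg_in :: "nat set set \<Rightarrow> nat set \<Rightarrow> nat \<Rightarrow> nat" where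
  "deg_in E S x = card {y \<in> S. {x, y} \<in> E}"

definition D_cut :: "nat \<Rightarrow> nat set set \<Rightarrow> (nat \<Rightarrow> nat set) \<Rightarrow> nat \<Rightarrow> real" where
  "D_cut r E A x =
     (\<Sum>(i, j) \<in> {(i, j). 1 \<le> i \<and> i < j \<and> j \<le> r - 1}.
        real (deg_in E (A i) x) * real (deg_in E (A j) x))"

definition psi_r :: "nat \<Rightarrow> real" where
  "psi_r r = (real r - 4) / (2 * (real r - 3))"

definition xi_r :: "nat \<Rightarrow> real" where
  "xi_r r = real r * (real r - 3) / (2 * (real r - 1)^2)"

definition phi_r :: "nat \<Rightarrow> real" where
  "phi_r r = (psi_r r + xi_r r) / 2"

definition bad_vertex :: "nat \<Rightarrow> nat \<Rightarrow> real \<Rightarrow> nat set set \<Rightarrow> (nat \<Rightarrow> nat set) \<Rightarrow> nat \<Rightarrow> bool" where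
  "bad_vertex n r p E A x \<longleftrightarrow>
     x \<in> A 1 \<and> D_cut r E A x < phi_r r * (real n)^2 * p^2"

definition bad_set :: "nat \<Rightarrow> nat \<Rightarrow> real \<Rightarrow> nat set set \<Rightarrow> (nat \<Rightarrow> nat set) \<Rightarrow> nat set" where
  "bad_set n r p E A = {x \<in> vset n. bad_vertex n r p E A x}"

end

theory Submission
  imports Defs "HOL-Library.FuncSet" "HOL-Real_Asymp.Real_Asymp"
begin


lemma genfun:
  fixes p z :: real
  assumes U: "finite U" and B: "B \<subseteq> U"
  shows "(\<Sum>E\<in>Pow U. p ^ card E * (1 - p) ^ (card U - card E) * z ^ card (E \<inter> B))
         = (1 - p + p * z) ^ card B"
proof -
  have "(\<Prod>e\<in>U. p * (if e \<in> B then z else 1) + (1 - p))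
     = (\<Sum>X\<in>Pow U. (\<Prod>e\<in>X. p * (if e \<in> B then z else 1)) * (\<Prod>e\<in>U-X. (1 - p)))"
    by (rule prod_add[OF U])
  also have "\<dots> = (\<Sum>E\<in>Pow U. p ^ card E * (1 - p) ^ (card U - card E) * z ^ card (E \<inter> B))"
  proof (rule sum.cong[OF refl])
    fix X assume X: "X \<in> Pow U"
    hence fX: "finite X" using U finite_subset by auto
    have "(\<Prod>e\<in>X. p * (if e \<in> B then z else 1)) = p ^ card X * (\<Prod>e\<in>X. (if e \<in> B then z else 1))"
      by (simp add: prod.distrib)
    also have "(\<Prod>e\<in>X. (if e \<in> B then z else 1)) = z ^ card (X \<inter> B)"
      using fX by (simp add: prod.If_cases Int_commute)
    finally have 1: "(\<Prod>e\<in>X. p * (if e \<in> B then z else 1)) = p ^ card X * z ^ card (X \<inter> B)" .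
    have 2: "(\<Prod>e\<in>U-X. (1 - p)) = (1-p) ^ (card U - card X)"
      using X U by (simp add: card_Diff_subset finite_subset)
    show "(\<Prod>e\<in>X. p * (if e \<in> B then z else 1)) * (\<Prod>e\<in>U-X. (1 - p)) =
          p ^ card X * (1 - p) ^ (card U - card X) * z ^ card (X \<inter> B)"
      using 1 2 by simp
  qed
  finally have L: "(\<Prod>e\<in>U. p * (if e \<in> B then z else 1) + (1 - p)) = 
      (\<Sum>E\<in>Pow U. p ^ card E * (1 - p) ^ (card U - card E) * z ^ card (E \<inter> B))" .
  have "(\<Prod>e\<in>U. p * (if e \<in> B then z else 1) + (1 - p)) = (\<Prod>e\<in>U. (if e \<in> B then 1 - p + p * z else 1))"
    by (rule prod.cong) auto
  also have "\<dots> = (1 - p + p * z) ^ card B"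
    using U B by (simp add: prod.If_cases Int_absorb1 inf.absorb2)
  finally show ?thesis using L by simp
qed

lemma gnp_markov:
  fixes p :: real
  assumes p: "0 \<le> p" "p \<le> 1"
    and G0: "\<And>E. E \<subseteq> all_edges n \<Longrightarrow> 0 \<le> G E"
    and G1: "\<And>E. E \<subseteq> all_edges n \<Longrightarrow> Q E \<Longrightarrow> 1 \<le> G E"
  shows "gnp_prob n p Q \<le> (\<Sum>E\<in>Pow (all_edges n).
            p ^ card E * (1 - p) ^ (card (all_edges n) - card E) * G E)"
proof -
  have fin: "finite (all_edges n)"
  proof -
    have "all_edges n \<subseteq> Pow (vset n)" unfolding all_edges_def by auto
    thus ?thesis unfolding vset_def by (meson finite_Pow_iff finite_atLeastAtMost finite_subset)
  qed
  have "gnp_prob n p Q = (\<Sum>E\<in>Pow (all_edges n). if Q E then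
       p ^ card E * (1 - p) ^ (card (all_edges n) - card E) else 0)"
    unfolding gnp_prob_def using fin
    by (simp add: sum.If_cases Pow_def Collect_conj_eq Int_commute)
  also have "\<dots> \<le> (\<Sum>E\<in>Pow (all_edges n).
            p ^ card E * (1 - p) ^ (card (all_edges n) - card E) * G E)"
  proof (rule sum_mono)
    fix E assume "E \<in> Pow (all_edges n)"
    hence E: "E \<subseteq> all_edges n" by auto
    have w: "0 \<le> p ^ card E * (1 - p) ^ (card (all_edges n) - card E)" using p by simp
    show "(if Q E then p ^ card E * (1 - p) ^ (card (all_edges n) - card E) else 0)
       \<le> p ^ card E * (1 - p) ^ (card (all_edges n) - card E) * G E"
      proof (cases "Q E")
      case True
      have "p ^ card E * (1 - p) ^ (card (all_edges n) - card E) * 1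
          \<le> p ^ card E * (1 - p) ^ (card (all_edges n) - card E) * G E"
        using G1[OF E True] w by (rule mult_left_mono)
      thus ?thesis using True by simp
    next
      case False thus ?thesis using G0[OF E] w by simp
    qed
  qed
  finally show ?thesis .
qed



lemma pairs_Suc: "{(i, j). 1 \<le> i \<and> i < j \<and> j \<le> Suc k} =
   {(i, j). 1 \<le> i \<and> i < j \<and> j \<le> k} \<union> (\<lambda>i. (i, Suc k)) ` {1..k}"
  by auto

lemma pairs_finite: "finite {(i, j::nat). 1 \<le> i \<and> i < j \<and> j \<le> k}"
proof -
  have "{(i, j::nat). 1 \<le> i \<and> i < j \<and> j \<le> k} \<subseteq> {..k} \<times> {..k}" by auto
  thus ?thesis by (rule finite_subset) auto
qed

lemma card_pairs: "2 * card {(i, j::nat). 1 \<le> i \<and> i < j \<and> j \<le> k} = k * (k - 1)"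
proof (induction k)
  case 0
  have "{(i, j::nat). 1 \<le> i \<and> i < j \<and> j \<le> 0} = {}" by auto
  hence "card {(i, j::nat). 1 \<le> i \<and> i < j \<and> j \<le> 0} = 0" by (simp only: card.empty)
  thus ?case by simp
next
  case (Suc k)
  have d: "{(i, j). 1 \<le> i \<and> i < j \<and> j \<le> k} \<inter> (\<lambda>i. (i, Suc k)) ` {1..k} = {}" by auto
  have "card {(i, j::nat). 1 \<le> i \<and> i < j \<and> j \<le> Suc k} =
     card {(i, j::nat). 1 \<le> i \<and> i < j \<and> j \<le> k} + card ((\<lambda>i. (i, Suc k)) ` {1..k})"
    unfolding pairs_Suc by (rule card_Un_disjoint[OF pairs_finite _ d]) auto
  also have "card ((\<lambda>i. (i, Suc k)) ` {1..k}) = k"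
    by (subst card_image) (auto simp: inj_on_def)
  finally show ?case using Suc.IH by (cases k) (auto simp: algebra_simps)
qed

lemma D_cut_lower:
  assumes L: "0 \<le> L" and deg: "\<And>i. i \<in> {1..r-1} \<Longrightarrow> L \<le> real (deg_in E (A i) x)"
  shows "real (card {(i, j::nat). 1 \<le> i \<and> i < j \<and> j \<le> r - 1}) * L^2 \<le> D_cut r E A x"
proof -
  have "real (card {(i, j::nat). 1 \<le> i \<and> i < j \<and> j \<le> r - 1}) * L^2 =
     (\<Sum>(i, j) \<in> {(i, j). 1 \<le> i \<and> i < j \<and> j \<le> r - 1}. L * L)"
    by (simp add: power2_eq_square)
  also have "\<dots> \<le> D_cut r E A x"
    unfolding D_cut_def
  proof (rule sum_mono)
    fix ij assume "ij \<in> {(i, j::nat). 1 \<le> i \<and> i < j \<and> j \<le> r - 1}"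
    then obtain i j where ij: "ij = (i,j)" "1 \<le> i" "i < j" "j \<le> r - 1" by auto
    have "L * L \<le> real (deg_in E (A i) x) * real (deg_in E (A j) x)"
      using deg[of i] deg[of j] ij L by (intro mult_mono) auto
    thus "(case ij of (i, j) \<Rightarrow> L * L) \<le>
          (case ij of (i, j) \<Rightarrow> real (deg_in E (A i) x) * real (deg_in E (A j) x))"
      using ij by simp
  qed
  finally show ?thesis .
qed



definition Acut :: "nat \<Rightarrow> (nat \<Rightarrow> nat) \<Rightarrow> nat \<Rightarrow> nat set" where
  "Acut n g i = {x \<in> vset n. g x = i}"

lemma bc_cong:
  assumes "\<forall>i\<in>{1..r-1}. A i = A' i"
  shows "balanced_cut n r \<delta> A = balanced_cut n r \<delta> A'"
proof -
  have "(\<Union>i\<in>{1..r-1}. A i) = (\<Union>i\<in>{1..r-1}. A' i)" using assms by auto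
  thus ?thesis using assms unfolding balanced_cut_def is_cut_def by auto
qed

lemma D_cong:
  assumes "\<forall>i\<in>{1..r-1}. A i = A' i"
  shows "D_cut r E A x = D_cut r E A' x"
  unfolding D_cut_def using assms by (intro sum.cong) auto

lemma bad_cong:
  assumes "\<forall>i\<in>{1..r-1}. A i = A' i" "r \<ge> 2"
  shows "bad_set n r p E A = bad_set n r p E A'"
proof -
  have "A 1 = A' 1" using assms by auto
  thus ?thesis unfolding bad_set_def bad_vertex_def using D_cong[OF assms(1)] by simp
qed

lemma cut_repr:
  assumes "is_cut n r A"
  obtains g where "g \<in> vset n \<rightarrow>\<^sub>E {1..r-1}" "\<forall>i\<in>{1..r-1}. Acut n g i = A i"
proof -
  define g where "g = restrict (\<lambda>x. SOME i. i \<in> {1..r-1} \<and> x \<in> A i) (vset n)"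
  have U: "(\<Union>i\<in>{1..r-1}. A i) = vset n" and D: "\<forall>i\<in>{1..r-1}. \<forall>j\<in>{1..r-1}. i \<noteq> j \<longrightarrow> A i \<inter> A j = {}"
    using assms unfolding is_cut_def by auto
  have gx: "g x \<in> {1..r-1} \<and> x \<in> A (g x)" if "x \<in> vset n" for x
  proof -
    have "x \<in> (\<Union>i\<in>{1..r-1}. A i)" using U that by simp
    hence "\<exists>i. i \<in> {1..r-1} \<and> x \<in> A i" by blast
    hence "(SOME i. i \<in> {1..r-1} \<and> x \<in> A i) \<in> {1..r-1} \<and> x \<in> A (SOME i. i \<in> {1..r-1} \<and> x \<in> A i)"
      by (rule someI_ex)
    thus ?thesis using that unfolding g_def by simp
  qed
  have "g \<in> vset n \<rightarrow>\<^sub>E {1..r-1}" using gx unfolding g_def by auto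
  moreover have "\<forall>i\<in>{1..r-1}. Acut n g i = A i"
  proof
    fix i assume i: "i \<in> {1..r-1}"
    show "Acut n g i = A i"
    proof
      show "Acut n g i \<subseteq> A i" unfolding Acut_def using gx by auto
      show "A i \<subseteq> Acut n g i"
      proof
        fix x assume x: "x \<in> A i"
        hence xv: "x \<in> vset n" using U i by auto
        have "g x = i" using gx[OF xv] D i x by blast
        thus "x \<in> Acut n g i" unfolding Acut_def using xv by auto
      qed
    qed
  qed
  ultimately show ?thesis using that by blast
qed

lemma bad_deg:
  assumes x: "x \<in> bad_set n r p E A" and L: "0 \<le> L"
    and hphi: "phi_r r * (real n)^2 * p^2 \<le> real (card {(i, j::nat). 1 \<le> i \<and> i < j \<and> j \<le> r - 1}) * L^2"
  shows "\<exists>i\<in>{1..r-1}. real (deg_in E (A i) x) < L"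
proof (rule ccontr)
  assume "\<not> ?thesis"
  hence "\<And>i. i \<in> {1..r-1} \<Longrightarrow> L \<le> real (deg_in E (A i) x)" by force
  from D_cut_lower[of L r E A x, OF L this] hphi have "phi_r r * (real n)^2 * p^2 \<le> D_cut r E A x" by linarith
  moreover have "D_cut r E A x < phi_r r * (real n)^2 * p^2"
    using x unfolding bad_set_def bad_vertex_def by auto
  ultimately show False by linarith
qed



definition Bset :: "nat \<Rightarrow> (nat \<Rightarrow> nat) \<Rightarrow> nat set \<Rightarrow> (nat \<Rightarrow> nat) \<Rightarrow> nat set set" where
  "Bset n g S f = (\<Union>x\<in>S. (\<lambda>y. {x, y}) ` (Acut n g (f x) - S))"

definition Gs :: "nat \<Rightarrow> nat \<Rightarrow> real \<Rightarrow> (nat \<Rightarrow> nat) set" where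
  "Gs n r \<delta> = {g \<in> vset n \<rightarrow>\<^sub>E {1..r-1}. balanced_cut n r \<delta> (Acut n g)}"

definition Ss :: "nat \<Rightarrow> nat \<Rightarrow> nat set set" where
  "Ss n m = {S. S \<subseteq> vset n \<and> card S = m}"

definition Gfun :: "nat \<Rightarrow> nat \<Rightarrow> real \<Rightarrow> nat \<Rightarrow> real \<Rightarrow> real \<Rightarrow> nat set set \<Rightarrow> real" where
  "Gfun n r \<delta> m s t E = (\<Sum>g\<in>Gs n r \<delta>. \<Sum>S\<in>Ss n m. \<Sum>f\<in>S \<rightarrow>\<^sub>E {1..r-1}.
       exp (s * t - s * real (card (E \<inter> Bset n g S f))))"

lemma fin_vset: "finite (vset n)" unfolding vset_def by simp

lemma fin_Gs: "finite (Gs n r \<delta>)"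
proof -
  have "Gs n r \<delta> \<subseteq> vset n \<rightarrow>\<^sub>E {1..r-1}" unfolding Gs_def by auto
  thus ?thesis by (rule finite_subset) (simp add: finite_PiE fin_vset)
qed

lemma fin_Ss: "finite (Ss n m)"
proof -
  have "Ss n m \<subseteq> Pow (vset n)" unfolding Ss_def by auto
  thus ?thesis by (rule finite_subset) (simp add: fin_vset)
qed

lemma fin_Fs: "finite S \<Longrightarrow> finite (S \<rightarrow>\<^sub>E {1..r-1::nat})"
  by (simp add: finite_PiE)

lemma Gfun_nonneg: "0 \<le> Gfun n r \<delta> m s t E"
  unfolding Gfun_def by (intro sum_nonneg) auto

lemma card_EB:
  assumes S: "S \<subseteq> vset n"
  shows "card (E \<inter> Bset n g S f) \<le> (\<Sum>x\<in>S. deg_in E (Acut n g (f x)) x)"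
proof -
  have fS: "finite S" using S fin_vset finite_subset by auto
  have fY: "finite {y \<in> Acut n g (f x). {x, y} \<in> E}" for x
    by (rule finite_subset[OF _ fin_vset[of n]]) (auto simp: Acut_def)
  have sub: "E \<inter> Bset n g S f \<subseteq> (\<Union>x\<in>S. (\<lambda>y. {x, y}) ` {y \<in> Acut n g (f x). {x, y} \<in> E})"
    unfolding Bset_def by auto
  have "card (E \<inter> Bset n g S f) \<le> card (\<Union>x\<in>S. (\<lambda>y. {x, y}) ` {y \<in> Acut n g (f x). {x, y} \<in> E})"
    by (rule card_mono[OF _ sub]) (use fS fY in auto)
  also have "\<dots> \<le> (\<Sum>x\<in>S. card ((\<lambda>y. {x, y}) ` {y \<in> Acut n g (f x). {x, y} \<in> E}))"
    by (rule card_UN_le[OF fS])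
  also have "\<dots> \<le> (\<Sum>x\<in>S. deg_in E (Acut n g (f x)) x)"
    unfolding deg_in_def by (intro sum_mono card_image_le fY)
  finally show ?thesis .
qed

lemma covering:
  assumes r: "r \<ge> 2" and s: "s \<ge> 0" and L: "0 \<le> L"
    and hphi: "phi_r r * (real n)^2 * p^2 \<le> real (card {(i, j::nat). 1 \<le> i \<and> i < j \<and> j \<le> r - 1}) * L^2"
    and mK: "\<forall>k::nat. K / p < real k \<longrightarrow> m \<le> k"
    and Q: "\<exists>A. balanced_cut n r \<delta> A \<and> K / p < real (card (bad_set n r p E A))"
    and t: "real m * L \<le> t"
  shows "1 \<le> Gfun n r \<delta> m s t E"
proof -
  obtain A where bA: "balanced_cut n r \<delta> A" and cA: "K / p < real (card (bad_set n r p E A))"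
    using Q by blast
  obtain g where g: "g \<in> vset n \<rightarrow>\<^sub>E {1..r-1}" "\<forall>i\<in>{1..r-1}. Acut n g i = A i"
    using cut_repr bA unfolding balanced_cut_def by blast
  have eq: "\<forall>i\<in>{1..r-1}. Acut n g i = A i" using g by simp
  have gG: "g \<in> Gs n r \<delta>" unfolding Gs_def using g bA bc_cong[OF eq] by auto
  have bs: "bad_set n r p E (Acut n g) = bad_set n r p E A" using bad_cong[OF eq r] .
  have "m \<le> card (bad_set n r p E (Acut n g))" using mK cA bs by auto
  then obtain S where S: "S \<subseteq> bad_set n r p E (Acut n g)" "card S = m" "finite S"
    by (rule obtain_subset_with_card_n)
  have Sv: "S \<subseteq> vset n" using S(1) unfolding bad_set_def by auto
  have SS: "S \<in> Ss n m" unfolding Ss_def using Sv S by auto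
  define f where "f = restrict (\<lambda>x. SOME i. i \<in> {1..r-1} \<and> real (deg_in E (Acut n g i) x) < L) S"
  have fx: "f x \<in> {1..r-1} \<and> real (deg_in E (Acut n g (f x)) x) < L" if x: "x \<in> S" for x
  proof -
    have "\<exists>i. i \<in> {1..r-1} \<and> real (deg_in E (Acut n g i) x) < L"
      using bad_deg[OF _ L hphi] S(1) x by blast
    from someI_ex[OF this] show ?thesis using x unfolding f_def by simp
  qed
  have fF: "f \<in> S \<rightarrow>\<^sub>E {1..r-1}" using fx unfolding f_def by auto
  have "real (card (E \<inter> Bset n g S f)) \<le> (\<Sum>x\<in>S. real (deg_in E (Acut n g (f x)) x))"
    using card_EB[OF Sv, of E g f] by (simp flip: of_nat_sum)
  also have "\<dots> \<le> (\<Sum>x\<in>S. L)" by (intro sum_mono) (use fx in force)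
  also have "\<dots> = real m * L" using S by simp
  finally have c: "real (card (E \<inter> Bset n g S f)) \<le> t" using t by linarith
  have one: "1 \<le> exp (s * t - s * real (card (E \<inter> Bset n g S f)))"
    using c s by (simp add: mult_left_mono)
  also have "\<dots> \<le> (\<Sum>f\<in>S \<rightarrow>\<^sub>E {1..r-1}. exp (s * t - s * real (card (E \<inter> Bset n g S f))))"
    by (rule member_le_sum[OF fF]) (auto intro: finite_PiE S(3))
  also have "\<dots> \<le> (\<Sum>S\<in>Ss n m. \<Sum>f\<in>S \<rightarrow>\<^sub>E {1..r-1}. exp (s * t - s * real (card (E \<inter> Bset n g S f))))"
    by (rule member_le_sum[OF SS]) (auto intro: sum_nonneg simp: fin_Ss)
  also have "\<dots> \<le> Gfun n r \<delta> m s t E"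
    unfolding Gfun_def
    by (rule member_le_sum[OF gG]) (auto intro!: sum_nonneg simp: fin_Gs)
  finally show ?thesis .
qed



lemma Bset_sub:
  assumes "S \<subseteq> vset n"
  shows "Bset n g S f \<subseteq> all_edges n"
  using assms unfolding Bset_def all_edges_def Acut_def by blast

lemma card_Bset:
  assumes S: "S \<subseteq> vset n"
  shows "card (Bset n g S f) = (\<Sum>x\<in>S. card (Acut n g (f x) - S))"
proof -
  have fS: "finite S" using S fin_vset finite_subset by auto
  have fA: "finite (Acut n g i - S)" for i
    by (rule finite_subset[OF _ fin_vset[of n]]) (auto simp: Acut_def)
  have "card (Bset n g S f) = (\<Sum>x\<in>S. card ((\<lambda>y. {x, y}) ` (Acut n g (f x) - S)))"
    unfolding Bset_def
  proof (rule card_UN_disjoint[OF fS])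
    show "\<forall>i\<in>S. finite ((\<lambda>y. {i, y}) ` (Acut n g (f i) - S))" using fA by auto
    show "\<forall>i\<in>S. \<forall>j\<in>S. i \<noteq> j \<longrightarrow> (\<lambda>y. {i, y}) ` (Acut n g (f i) - S) \<inter> (\<lambda>y. {j, y}) ` (Acut n g (f j) - S) = {}"
      by (auto simp: doubleton_eq_iff)
  qed
  also have "\<dots> = (\<Sum>x\<in>S. card (Acut n g (f x) - S))"
    by (intro sum.cong refl card_image) (auto simp: inj_on_def doubleton_eq_iff)
  finally show ?thesis .
qed

lemma card_Bset_lower:
  assumes g: "g \<in> Gs n r \<delta>" and S: "S \<in> Ss n m" and f: "f \<in> S \<rightarrow>\<^sub>E {1..r-1}"
    and N0: "N0 \<le> (1 - \<delta>) * real n / real (r - 1) - real m"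
  shows "real m * N0 \<le> real (card (Bset n g S f))"
proof -
  have Sv: "S \<subseteq> vset n" and cS: "card S = m" using S unfolding Ss_def by auto
  have fS: "finite S" using Sv fin_vset finite_subset by auto
  have bal: "balanced_cut n r \<delta> (Acut n g)" using g unfolding Gs_def by auto
  have each: "N0 \<le> real (card (Acut n g (f x) - S))" if x: "x \<in> S" for x
  proof -
    have fx: "f x \<in> {1..r-1}" using f x by auto
    have "(1 - \<delta>) * real n / real (r - 1) < real (card (Acut n g (f x)))"
      using bal fx unfolding balanced_cut_def by auto
    moreover have "card (Acut n g (f x)) - card S \<le> card (Acut n g (f x) - S)"
      by (rule diff_card_le_card_Diff[OF fS])
    hence "real (card (Acut n g (f x))) - real (card S) \<le> real (card (Acut n g (f x) - S))"
      by linarith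
    moreover have "real (card S) = real m" using cS by simp
    ultimately show ?thesis using N0 by (smt (verit))
  qed
  have "real m * N0 = (\<Sum>x\<in>S. N0)" using cS by simp
  also have "\<dots> \<le> (\<Sum>x\<in>S. real (card (Acut n g (f x) - S)))" by (intro sum_mono each)
  also have "\<dots> = real (card (Bset n g S f))" using card_Bset[OF Sv] by (simp flip: of_nat_sum)
  finally show ?thesis .
qed

lemma prob_bound:
  assumes r: "r \<ge> 2" and p: "0 \<le> p" "p \<le> 1" and s: "s \<ge> 0" and L: "0 \<le> L"
    and hphi: "phi_r r * (real n)^2 * p^2 \<le> real (card {(i, j::nat). 1 \<le> i \<and> i < j \<and> j \<le> r - 1}) * L^2"
    and mK: "\<forall>k::nat. K / p < real k \<longrightarrow> m \<le> k"
    and t: "real m * L \<le> t"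
    and N0: "N0 \<le> (1 - \<delta>) * real n / real (r - 1) - real m"
  shows "gnp_prob n p (\<lambda>E. \<exists>A. balanced_cut n r \<delta> A \<and> K / p < real (card (bad_set n r p E A)))
     \<le> real (r-1) ^ n * real n ^ m * real (r-1) ^ m * exp (s * t - p * (1 - exp (-s)) * real m * N0)"
proof -
  let ?U = "all_edges n"
  let ?w = "\<lambda>E. p ^ card E * (1 - p) ^ (card ?U - card E)"
  let ?T = "exp (s * t - p * (1 - exp (-s)) * real m * N0)"
  have finU: "finite ?U"
  proof -
    have "all_edges n \<subseteq> Pow (vset n)" unfolding all_edges_def by auto
    thus ?thesis by (meson finite_Pow_iff fin_vset finite_subset)
  qed
  have "gnp_prob n p (\<lambda>E. \<exists>A. balanced_cut n r \<delta> A \<and> K / p < real (card (bad_set n r p E A)))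
     \<le> (\<Sum>E\<in>Pow ?U. ?w E * Gfun n r \<delta> m s t E)"
    by (rule gnp_markov[OF p]) (auto intro: Gfun_nonneg covering[OF r s L hphi mK _ t])
  also have "\<dots> = (\<Sum>g\<in>Gs n r \<delta>. \<Sum>S\<in>Ss n m. \<Sum>f\<in>S \<rightarrow>\<^sub>E {1..r-1}.
       (\<Sum>E\<in>Pow ?U. ?w E * exp (s * t - s * real (card (E \<inter> Bset n g S f)))))"
    unfolding Gfun_def by (simp add: sum_distrib_left sum.swap[of _ "Pow ?U"])
  also have "\<dots> = (\<Sum>g\<in>Gs n r \<delta>. \<Sum>S\<in>Ss n m. \<Sum>f\<in>S \<rightarrow>\<^sub>E {1..r-1}.
       exp (s * t) * (1 - p + p * exp (-s)) ^ card (Bset n g S f))"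
  proof (intro sum.cong refl)
    fix g S f assume S: "S \<in> Ss n m"
    have B: "Bset n g S f \<subseteq> ?U" using S Bset_sub unfolding Ss_def by auto
    have "(\<Sum>E\<in>Pow ?U. ?w E * exp (s * t - s * real (card (E \<inter> Bset n g S f)))) =
          (\<Sum>E\<in>Pow ?U. exp (s * t) * (?w E * exp (-s) ^ card (E \<inter> Bset n g S f)))"
      by (intro sum.cong refl) (simp add: exp_diff exp_minus exp_of_nat_mult[symmetric] field_simps power_divide mult.commute)
    also have "\<dots> = exp (s * t) * (\<Sum>E\<in>Pow ?U. ?w E * exp (-s) ^ card (E \<inter> Bset n g S f))"
      by (simp add: sum_distrib_left)
    also have "\<dots> = exp (s * t) * (1 - p + p * exp (-s)) ^ card (Bset n g S f)"
      using genfun[OF finU B, of p "exp (-s)"] by simp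
    finally show "(\<Sum>E\<in>Pow ?U. ?w E * exp (s * t - s * real (card (E \<inter> Bset n g S f)))) =
          exp (s * t) * (1 - p + p * exp (-s)) ^ card (Bset n g S f)" .
  qed
  also have "\<dots> \<le> (\<Sum>g\<in>Gs n r \<delta>. \<Sum>S\<in>Ss n m. \<Sum>f\<in>S \<rightarrow>\<^sub>E {1..r-1}. ?T)"
  proof (intro sum_mono)
    fix g S f assume g: "g \<in> Gs n r \<delta>" and S: "S \<in> Ss n m" and f: "f \<in> S \<rightarrow>\<^sub>E {1..r-1}"
    have cB: "real m * N0 \<le> real (card (Bset n g S f))" by (rule card_Bset_lower[OF g S f N0])
    have b0: "0 \<le> 1 - p + p * exp (-s)" using p by (simp add: add_nonneg_nonneg)
    have b1: "1 - p + p * exp (-s) \<le> exp (- (p * (1 - exp (-s))))"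
      using exp_ge_add_one_self[of "- (p * (1 - exp (-s)))"] by (simp add: algebra_simps)
    have "(1 - p + p * exp (-s)) ^ card (Bset n g S f) \<le> exp (- (p * (1 - exp (-s)))) ^ card (Bset n g S f)"
      by (rule power_mono[OF b1 b0])
    also have "\<dots> = exp (- (p * (1 - exp (-s))) * real (card (Bset n g S f)))"
      by (simp add: exp_of_nat_mult[symmetric] mult.commute)
    also have "\<dots> \<le> exp (- (p * (1 - exp (-s))) * (real m * N0))"
    proof -
      have "0 \<le> p * (1 - exp (-s))" using p s by simp
      hence "p * (1 - exp (-s)) * (real m * N0) \<le> p * (1 - exp (-s)) * real (card (Bset n g S f))"
        by (rule mult_left_mono[OF cB])
      thus ?thesis by simp
    qed
    finally have "exp (s * t) * (1 - p + p * exp (-s)) ^ card (Bset n g S f)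
       \<le> exp (s * t) * exp (- (p * (1 - exp (-s))) * (real m * N0))"
      by (simp add: mult_left_mono)
    also have "\<dots> = ?T" by (simp add: exp_add[symmetric] algebra_simps)
    finally show "exp (s * t) * (1 - p + p * exp (-s)) ^ card (Bset n g S f) \<le> ?T" .
  qed
  also have "\<dots> = real (card (Gs n r \<delta>)) * real (card (Ss n m)) * real (r-1) ^ m * ?T"
  proof -
    have "\<And>S. S \<in> Ss n m \<Longrightarrow> card (S \<rightarrow>\<^sub>E {1..r-1}) = (r-1) ^ m"
      unfolding Ss_def by (subst card_PiE) (auto dest: finite_subset[OF _ fin_vset])
    hence "\<And>S. S \<in> Ss n m \<Longrightarrow> (\<Sum>f\<in>S \<rightarrow>\<^sub>E {1..r-1}. ?T) = real (r-1) ^ m * ?T" by simp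
    thus ?thesis by simp
  qed
  also have "\<dots> \<le> real (r-1) ^ n * real n ^ m * real (r-1) ^ m * ?T"
  proof -
    have "card (Gs n r \<delta>) \<le> card (vset n \<rightarrow>\<^sub>E {1..r-1})"
      by (rule card_mono) (auto simp: Gs_def finite_PiE fin_vset)
    also have "\<dots> = (r-1) ^ n" by (simp add: card_PiE fin_vset vset_def)
    finally have G: "real (card (Gs n r \<delta>)) \<le> real (r-1) ^ n"
      by (metis of_nat_le_iff of_nat_power)
    have "card (Ss n m) = n choose m" unfolding Ss_def using n_subsets[OF fin_vset, of n m]
      by (simp add: vset_def)
    also have "\<dots> \<le> n ^ m"
      by (cases "m \<le> n") (auto intro: binomial_le_pow simp: binomial_eq_0)
    finally have SS: "real (card (Ss n m)) \<le> real n ^ m"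
      by (metis of_nat_le_iff of_nat_power)
    show ?thesis
      by (intro mult_right_mono mult_mono G SS) auto
  qed
  finally show ?thesis .
qed



lemma final_step:
  fixes n r :: nat and p \<delta> \<delta>0 lam \<beta> s \<gamma> K Rr :: real
  assumes r: "r \<ge> 4" and Rr: "Rr = real (r - 1)" and p: "0 < p" "p \<le> 1" and n: "n \<ge> 3"
    and sq: "sqrt (real n) \<le> p * real n" and K: "K > 0" and \<gamma>: "\<gamma> > 0"
    and e4: "K * sqrt (real n) + 1 \<le> \<delta>0 / Rr * real n"
    and e5: "2 * (ln (real n) + ln Rr) \<le> \<gamma> * sqrt (real n)"
    and lam: "lam \<ge> 0"
    and hphi: "phi_r r \<le> real (card {(i, j::nat). 1 \<le> i \<and> i < j \<and> j \<le> r - 1}) * lam^2"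
    and \<delta>: "\<delta> < \<delta>0" and \<beta>: "\<beta> = (1 - 2 * \<delta>0) / Rr" and s: "s \<ge> 0"
    and h\<gamma>: "\<gamma> \<le> (1 - exp (-s)) * \<beta> - s * lam"
    and Kg: "K * \<gamma> / 2 = ln Rr + 1"
  shows "gnp_prob n p (\<lambda>E. \<exists>A. balanced_cut n r \<delta> A \<and> K / p < real (card (bad_set n r p E A)))
     \<le> exp (- real n)"
proof -
  have Rr3: "Rr \<ge> 3" using r Rr by simp
  define m where "m = nat \<lfloor>K / p\<rfloor> + 1"
  have Kp0: "0 \<le> K / p" using K p by simp
  have fl: "real (nat \<lfloor>K / p\<rfloor>) = of_int \<lfloor>K / p\<rfloor>" using Kp0 by simp
  have fl2: "K / p < of_int \<lfloor>K / p\<rfloor> + 1" using floor_le_iff[of "K/p" "\<lfloor>K/p\<rfloor>"] by simp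
  have mgt: "K / p < real m" unfolding m_def of_nat_add of_nat_1 using fl fl2 by linarith
  have mle: "real m \<le> K / p + 1" unfolding m_def using Kp0 by simp
  have mK: "\<forall>k::nat. K / p < real k \<longrightarrow> m \<le> k"
  proof (intro allI impI)
    fix k :: nat assume "K / p < real k"
    hence "\<lfloor>K / p\<rfloor> < int k" using of_int_floor_le[of "K/p"] by linarith
    moreover have "0 \<le> \<lfloor>K / p\<rfloor>" using Kp0 by simp
    ultimately have "nat \<lfloor>K / p\<rfloor> < k" by (simp add: nat_less_iff)
    thus "m \<le> k" unfolding m_def by simp
  qed
  define L where "L = lam * real n * p"
  have L0: "0 \<le> L" unfolding L_def using lam p by simp
  have hphi2: "phi_r r * (real n)^2 * p^2 \<le> real (card {(i, j::nat). 1 \<le> i \<and> i < j \<and> j \<le> r - 1}) * L^2"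
  proof -
    have "phi_r r * ((real n)^2 * p^2) \<le> real (card {(i, j::nat). 1 \<le> i \<and> i < j \<and> j \<le> r - 1}) * lam^2 * ((real n)^2 * p^2)"
      by (rule mult_right_mono[OF hphi]) simp
    thus ?thesis unfolding L_def by (simp add: power_mult_distrib mult_ac)
  qed
  have nsq: "real n = sqrt (real n) * sqrt (real n)" by simp
  have sqpos: "sqrt (real n) > 0" using n by simp
  have invp: "1 / p \<le> sqrt (real n)"
  proof -
    have e: "p * real n = sqrt (real n) * (p * sqrt (real n))" using nsq by (metis mult.assoc mult.commute)
    have "sqrt (real n) * 1 \<le> sqrt (real n) * (p * sqrt (real n))" using sq e by linarith
    hence "1 \<le> p * sqrt (real n)" using sqpos by (metis mult_le_cancel_left_pos)
    thus ?thesis using p by (simp add: field_simps)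
  qed
  have mbound: "real m \<le> \<delta>0 / Rr * real n"
  proof -
    have "K / p \<le> K * sqrt (real n)" using invp K by (simp add: divide_inverse mult_left_mono flip: inverse_eq_divide)
    thus ?thesis using mle e4 by linarith
  qed
  define N0 where "N0 = \<beta> * real n"
  have N0: "N0 \<le> (1 - \<delta>) * real n / real (r - 1) - real m"
  proof -
    have "(1 - \<delta>0) * real n / Rr \<le> (1 - \<delta>) * real n / Rr"
      using \<delta> Rr3 by (intro divide_right_mono mult_right_mono) auto
    moreover have "N0 = (1 - \<delta>0) * real n / Rr - \<delta>0 / Rr * real n"
      unfolding N0_def \<beta> using Rr3 by (simp add: field_simps)
    ultimately show ?thesis unfolding Rr[symmetric] using mbound by linarith
  qed
  note PB = prob_bound[of r p s L n K m "real m * L" N0 \<delta>, OF _ _ _ s L0 hphi2 mK order.refl N0]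
  have PB: "gnp_prob n p (\<lambda>E. \<exists>A. balanced_cut n r \<delta> A \<and> K / p < real (card (bad_set n r p E A)))
     \<le> Rr ^ n * real n ^ m * Rr ^ m * exp (s * (real m * L) - p * (1 - exp (-s)) * real m * N0)"
    using PB r p Rr by simp
  have ex: "s * (real m * L) - p * (1 - exp (-s)) * real m * N0 \<le> - \<gamma> * (real m * real n * p)"
  proof -
    have "s * (real m * L) - p * (1 - exp (-s)) * real m * N0
        = - ((1 - exp (-s)) * \<beta> - s * lam) * (real m * real n * p)"
      unfolding L_def N0_def by (simp add: algebra_simps)
    also have "\<dots> \<le> - \<gamma> * (real m * real n * p)"
      using h\<gamma> p by (intro mult_right_mono) auto
    finally show ?thesis .
  qed
  have lnpos: "ln (real n) + ln Rr \<ge> 0" using n Rr3 by simp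
  have "Rr ^ n * real n ^ m * Rr ^ m * exp (s * (real m * L) - p * (1 - exp (-s)) * real m * N0)
      \<le> Rr ^ n * real n ^ m * Rr ^ m * exp (- \<gamma> * (real m * real n * p))"
    using ex Rr3 by (intro mult_left_mono) auto
  also have "\<dots> = exp (real n * ln Rr + real m * (ln (real n) + ln Rr) - \<gamma> * (real m * real n * p))"
  proof -
    have "Rr ^ n = exp (real n * ln Rr)" using Rr3 by (simp add: exp_of_nat_mult)
    moreover have "Rr ^ m = exp (real m * ln Rr)" using Rr3 by (simp add: exp_of_nat_mult)
    moreover have "real n ^ m = exp (real m * ln (real n))" using n by (simp add: exp_of_nat_mult)
    ultimately have "Rr ^ n * real n ^ m * Rr ^ m * exp (- \<gamma> * (real m * real n * p)) =
        exp (real n * ln Rr) * exp (real m * ln (real n)) * exp (real m * ln Rr) * exp (- \<gamma> * (real m * real n * p))"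
      by simp
    also have "\<dots> = exp (real n * ln Rr + real m * ln (real n) + real m * ln Rr + - \<gamma> * (real m * real n * p))"
      by (simp only: mult_exp_exp)
    also have "\<dots> = exp (real n * ln Rr + real m * (ln (real n) + ln Rr) - \<gamma> * (real m * real n * p))"
      by (rule arg_cong[where f=exp]) (simp add: algebra_simps)
    finally show ?thesis .
  qed
  also have "\<dots> \<le> exp (- real n)"
  proof -
    have "real m * (ln (real n) + ln Rr) \<le> real m * (\<gamma> * sqrt (real n) / 2)"
      using e5 by (intro mult_left_mono) auto
    also have "\<dots> \<le> real m * (\<gamma> * (p * real n) / 2)"
      using sq \<gamma> by (intro mult_left_mono divide_right_mono) auto
    finally have a: "real m * (ln (real n) + ln Rr) \<le> \<gamma> * (real m * real n * p) / 2"
      by (simp add: algebra_simps)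
    have "K * real n \<le> real m * p * real n"
    proof -
      have "K \<le> real m * p" using mgt p by (simp add: field_simps)
      thus ?thesis by (intro mult_right_mono) auto
    qed
    hence b: "\<gamma> * K * real n / 2 \<le> \<gamma> * (real m * real n * p) / 2"
      using \<gamma> by (simp add: algebra_simps mult_left_mono)
    have c: "\<gamma> * K * real n / 2 = real n * (ln Rr + 1)" using Kg by (simp add: algebra_simps)
    show ?thesis using a b c by (simp add: algebra_simps)
  qed
  finally show ?thesis using PB by linarith
qed



lemma phi_facts:
  fixes r :: nat assumes r: "r \<ge> 4"
  shows "0 < phi_r r" "phi_r r < (real r - 2) / (2 * (real r - 1))"
proof -
  have x: "real r \<ge> 4" using r by simp
  have p0: "0 \<le> psi_r r" unfolding psi_r_def using x by simp
  have x0: "0 < xi_r r" unfolding xi_r_def using x by simp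
  show "0 < phi_r r" unfolding phi_r_def using p0 x0 by simp
  have p1: "psi_r r < (real r - 2) / (2 * (real r - 1))"
    unfolding psi_r_def using x by (simp add: divide_simps) (simp add: algebra_simps)
  have x1: "xi_r r < (real r - 2) / (2 * (real r - 1))"
    unfolding xi_r_def using x by (simp add: divide_simps power2_eq_square) (simp add: algebra_simps)
  define Y where "Y = (real r - 2) / (2 * (real r - 1))"
  have "psi_r r + xi_r r < Y + Y" using p1 x1 unfolding Y_def by (rule add_strict_mono)
  hence "(psi_r r + xi_r r) / 2 < Y" by simp
  hence "(psi_r r + xi_r r) / 2 < (real r - 2) / (2 * (real r - 1))" unfolding Y_def .
  thus "phi_r r < (real r - 2) / (2 * (real r - 1))" unfolding phi_r_def .
qed



lemma gnp_nonneg: "0 \<le> p \<Longrightarrow> p \<le> 1 \<Longrightarrow> 0 \<le> gnp_prob n p Q"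
  unfolding gnp_prob_def by (intro sum_nonneg) simp

lemma exp_s_bound:
  fixes s :: real assumes "0 \<le> s"
  shows "s - s^2 \<le> 1 - exp (-s)"
proof -
  have "1 + s \<le> exp s" by (rule exp_ge_add_one_self)
  hence e: "exp (-s) \<le> 1 / (1 + s)" using assms by (simp add: exp_minus divide_simps)
  have "1 / (1 + s) \<le> 1 - s + s^2" using assms
    by (simp add: divide_simps power2_eq_square) (simp add: algebra_simps)
  thus ?thesis using e by linarith
qed

theorem mainTheorem13:
  fixes r :: nat
  assumes "r \<ge> 4"
  shows "\<exists>\<delta>0>0. \<forall>\<delta>. 0 < \<delta> \<and> \<delta> < \<delta>0 \<longrightarrow>
           (\<exists>C0. \<forall>C\<ge>C0. \<exists>K::real. \<forall>p :: nat \<Rightarrow> real.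
              (p \<longlonglongrightarrow> 0) \<and>
              (\<forall>\<^sub>F n in sequentially.
                  p n > C * real n powr (-2 / (real r + 1))
                          * ln (real n) powr (2 / ((real r + 1) * (real r - 2))))
              \<longrightarrow>
              ((\<lambda>n. gnp_prob n (p n)
                   (\<lambda>E. \<exists>A. balanced_cut n r \<delta> A \<and>
                          real (card (bad_set n r (p n) E A)) > K / p n))
                \<longlonglongrightarrow> 0))"
proof -
  have r: "r \<ge> 4" by fact
  define Rr where "Rr = real (r - 1)"
  have Rrx: "Rr = real r - 1" unfolding Rr_def using r by simp
  have Rr3: "Rr \<ge> 3" using r Rrx by simp
  define Pc where "Pc = real (card {(i, j::nat). 1 \<le> i \<and> i < j \<and> j \<le> r - 1})"
  have Pc: "Pc = Rr * (Rr - 1) / 2"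
  proof -
    have "2 * card {(i, j::nat). 1 \<le> i \<and> i < j \<and> j \<le> r - 1} = (r - 1) * (r - 1 - 1)"
      by (rule card_pairs)
    hence "real (2 * card {(i, j::nat). 1 \<le> i \<and> i < j \<and> j \<le> r - 1}) = real ((r - 1) * (r - 1 - 1))" by simp
    hence "2 * Pc = real ((r - 1) * (r - 1 - 1))" unfolding Pc_def by simp
    moreover have "real ((r - 1) * (r - 1 - 1)) = Rr * (Rr - 1)" unfolding Rr_def using r by (simp add: of_nat_diff)
    ultimately show ?thesis by simp
  qed
  have "Rr * (Rr - 1) > 0" using Rr3 by (intro mult_pos_pos) auto
  hence Pcpos: "Pc > 0" using Pc by simp
  define phi where "phi = phi_r r"
  have phi0: "0 < phi" and phi1: "phi < (real r - 2) / (2 * (real r - 1))"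
    using phi_facts[OF r] unfolding phi_def by auto
  have phi2: "phi * Rr^2 < Pc"
  proof -
    have "(real r - 2) / (2 * (real r - 1)) * Rr^2 = Pc"
      unfolding Pc Rrx using r by (simp add: field_simps power2_eq_square)
    moreover have "phi * Rr^2 < (real r - 2) / (2 * (real r - 1)) * Rr^2"
      using phi1 Rr3 by (intro mult_strict_right_mono) auto
    ultimately show ?thesis by simp
  qed
  define lam where "lam = sqrt (phi / Pc)"
  have lam0: "lam \<ge> 0" unfolding lam_def using phi0 Pcpos by simp
  have lam2: "Pc * lam^2 = phi" unfolding lam_def using phi0 Pcpos by simp
  have lamR: "lam * Rr < 1"
  proof -
    have "(lam * Rr)^2 = phi * Rr^2 / Pc" using lam2 Pcpos by (simp add: power_mult_distrib field_simps)
    also have "\<dots> < 1" using phi2 Pcpos by simp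
    finally have "(lam * Rr)^2 < 1^2" by simp
    thus ?thesis using lam0 Rr3 by (meson power_less_imp_less_base zero_le_one)
  qed
  define \<delta>0 where "\<delta>0 = (1 - lam * Rr) / 4"
  have \<delta>0: "\<delta>0 > 0" unfolding \<delta>0_def using lamR by simp
  define \<beta> where "\<beta> = (1 - 2 * \<delta>0) / Rr"
  have \<beta>: "\<beta> = (1 + lam * Rr) / (2 * Rr)" unfolding \<beta>_def \<delta>0_def using Rr3 by (simp add: field_simps)
  have "0 \<le> lam * Rr" using lam0 Rr3 by simp
  hence \<beta>pos: "\<beta> > 0" unfolding \<beta> using Rr3 by (intro divide_pos_pos) auto
  have \<beta>lam: "lam < \<beta>"
  proof -
    have "lam * (2 * Rr) < 1 + lam * Rr" using lamR by (simp add: algebra_simps)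
    thus ?thesis unfolding \<beta> using Rr3 by (simp add: field_simps)
  qed
  define s where "s = (\<beta> - lam) / (2 * \<beta>)"
  have s0: "s \<ge> 0" unfolding s_def using \<beta>lam \<beta>pos by simp
  define \<gamma> where "\<gamma> = (\<beta> - lam)^2 / (4 * \<beta>)"
  have \<gamma>0: "\<gamma> > 0" unfolding \<gamma>_def using \<beta>lam \<beta>pos by simp
  have h\<gamma>: "\<gamma> \<le> (1 - exp (-s)) * \<beta> - s * lam"
  proof -
    have "(s - s^2) * \<beta> \<le> (1 - exp (-s)) * \<beta>"
      using exp_s_bound[OF s0] \<beta>pos by (intro mult_right_mono) auto
    moreover have "(s - s^2) * \<beta> - s * lam = \<gamma>"
      unfolding s_def \<gamma>_def using \<beta>pos by (simp add: field_simps power2_eq_square)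
    ultimately show ?thesis by linarith
  qed
  have hphi: "phi_r r \<le> Pc * lam^2" using lam2 unfolding phi_def by simp
  define K where "K = 2 * (ln Rr + 1) / \<gamma>"
  have "ln Rr > 0" using Rr3 by simp
  hence Kpos: "K > 0" unfolding K_def using \<gamma>0 by (intro divide_pos_pos) auto
  have Kg: "K * \<gamma> / 2 = ln Rr + 1" unfolding K_def using \<gamma>0 by simp
  show ?thesis
  proof (rule exI[of _ \<delta>0], intro conjI allI impI \<delta>0)
    fix \<delta> :: real assume \<delta>: "0 < \<delta> \<and> \<delta> < \<delta>0"
    show "\<exists>C0. \<forall>C\<ge>C0. \<exists>K::real. \<forall>p :: nat \<Rightarrow> real.
              (p \<longlonglongrightarrow> 0) \<and>
              (\<forall>\<^sub>F n in sequentially.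
                  p n > C * real n powr (-2 / (real r + 1))
                          * ln (real n) powr (2 / ((real r + 1) * (real r - 2))))
              \<longrightarrow>
              ((\<lambda>n. gnp_prob n (p n)
                   (\<lambda>E. \<exists>A. balanced_cut n r \<delta> A \<and>
                          real (card (bad_set n r (p n) E A)) > K / p n))
                \<longlonglongrightarrow> 0)"
    proof (rule exI[of _ 1], intro allI impI, rule exI[of _ K], intro allI impI)
      fix C :: real and p :: "nat \<Rightarrow> real"
      assume C: "1 \<le> C"
      assume hp: "(p \<longlonglongrightarrow> 0) \<and>
              (\<forall>\<^sub>F n in sequentially.
                  p n > C * real n powr (-2 / (real r + 1))
                          * ln (real n) powr (2 / ((real r + 1) * (real r - 2))))"
      have ev1: "\<forall>\<^sub>F n in sequentially. p n < 1"
        using order_tendstoD(2)[OF conjunct1[OF hp], of 1] by simp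
      have ev3: "\<forall>\<^sub>F n in sequentially. 3 \<le> n" by (rule eventually_ge_at_top)
      have ev4: "\<forall>\<^sub>F n in sequentially. K * sqrt (real n) + 1 \<le> \<delta>0 / Rr * real n"
        using Kpos \<delta>0 Rr3 by real_asymp
      have ev5: "\<forall>\<^sub>F n in sequentially. 2 * (ln (real n) + ln Rr) \<le> \<gamma> * sqrt (real n)"
        using \<gamma>0 Rr3 by real_asymp
      have key: "\<forall>\<^sub>F n in sequentially.
          0 \<le> gnp_prob n (p n) (\<lambda>E. \<exists>A. balanced_cut n r \<delta> A \<and> real (card (bad_set n r (p n) E A)) > K / p n)
          \<and> gnp_prob n (p n) (\<lambda>E. \<exists>A. balanced_cut n r \<delta> A \<and> real (card (bad_set n r (p n) E A)) > K / p n)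
              \<le> exp (- real n)"
        using ev1 ev3 ev4 ev5 conjunct2[OF hp]
      proof eventually_elim
        case (elim n)
        have n3: "3 \<le> n" and pl: "p n < 1" and e4: "K * sqrt (real n) + 1 \<le> \<delta>0 / Rr * real n"
          and e5: "2 * (ln (real n) + ln Rr) \<le> \<gamma> * sqrt (real n)"
          and lb: "p n > C * real n powr (-2 / (real r + 1)) * ln (real n) powr (2 / ((real r + 1) * (real r - 2)))"
          using elim by auto
        have nr: "real n \<ge> 3" using n3 by simp
        have A0: "real n powr (-2 / (real r + 1)) > 0" using nr by simp
        have ln1: "ln (real n) \<ge> 1"
        proof -
          have "exp 1 \<le> real n" using exp_le nr by linarith
          hence "ln (exp 1) \<le> ln (real n)" using nr by (subst ln_le_cancel_iff) auto
          thus ?thesis by simp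
        qed
        have B1: "ln (real n) powr (2 / ((real r + 1) * (real r - 2))) \<ge> 1"
          using ln1 r by (intro ge_one_powr_ge_zero) auto
        have "real n powr (-2 / (real r + 1)) \<le> C * real n powr (-2 / (real r + 1)) * ln (real n) powr (2 / ((real r + 1) * (real r - 2)))"
        proof -
          have "1 * real n powr (-2 / (real r + 1)) * 1 \<le> C * real n powr (-2 / (real r + 1)) * ln (real n) powr (2 / ((real r + 1) * (real r - 2)))"
            using C B1 A0 by (intro mult_mono) auto
          thus ?thesis by simp
        qed
        hence pA: "real n powr (-2 / (real r + 1)) < p n" using lb by linarith
        have ppos: "0 < p n" using pA A0 by linarith
        have sq: "sqrt (real n) \<le> p n * real n"
        proof -
          have "real n powr (-2 / (real r + 1)) * real n = real n powr (-2 / (real r + 1)) * real n powr 1"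
            using nr by simp
          also have "\<dots> = real n powr (-2 / (real r + 1) + 1)" by (rule powr_add[symmetric])
          also have "\<dots> \<ge> real n powr (1/2)"
          proof -
            have "2 / (real r + 1) \<le> 1/2" using r by (simp add: divide_simps)
            hence "1/2 \<le> -2 / (real r + 1) + 1" by simp
            thus ?thesis using nr by (intro powr_mono) auto
          qed
          finally have "real n powr (1/2) \<le> real n powr (-2 / (real r + 1)) * real n" .
          also have "\<dots> \<le> p n * real n" using pA nr by (intro mult_right_mono) auto
          finally show ?thesis using nr by (simp add: powr_half_sqrt)
        qed
        have "gnp_prob n (p n) (\<lambda>E. \<exists>A. balanced_cut n r \<delta> A \<and> K / p n < real (card (bad_set n r (p n) E A)))
             \<le> exp (- real n)"
          by (rule final_step[OF r Rr_def ppos _ n3 sq Kpos \<gamma>0 e4 e5 lam0 _ _ \<beta>_def s0 h\<gamma> Kg])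
             (use pl hphi \<delta> Pc_def in auto)
        moreover have "0 \<le> gnp_prob n (p n) (\<lambda>E. \<exists>A. balanced_cut n r \<delta> A \<and> K / p n < real (card (bad_set n r (p n) E A)))"
          using ppos pl by (intro gnp_nonneg) auto
        ultimately show ?case by simp
      qed
      have lim: "(\<lambda>n. exp (- real n)) \<longlonglongrightarrow> 0" by real_asymp
      show "(\<lambda>n. gnp_prob n (p n) (\<lambda>E. \<exists>A. balanced_cut n r \<delta> A \<and> real (card (bad_set n r (p n) E A)) > K / p n))
            \<longlonglongrightarrow> 0"
      proof (rule tendsto_sandwich[OF _ _ tendsto_const lim])
        show "\<forall>\<^sub>F n in sequentially. 0 \<le> gnp_prob n (p n) (\<lambda>E. \<exists>A. balanced_cut n r \<delta> A \<and> real (card (bad_set n r (p n) E A)) > K / p n)"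
          using key by (rule eventually_mono) simp
        show "\<forall>\<^sub>F n in sequentially. gnp_prob n (p n) (\<lambda>E. \<exists>A. balanced_cut n r \<delta> A \<and> real (card (bad_set n r (p n) E A)) > K / p n) \<le> exp (- real n)"
          using key by (rule eventually_mono) simp
      qed
    qed
  qed
qed


end
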